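(* Let $\mathbb{F}$ be the field of order $q$ ($q$ a prime power), and let $S\subset\mathbb{F}^\times$ be such that for all distinct $i,j\in S$ we have $i+j\neq0$ and $ij\neq-1$. For $i\in S$ let $$Z_i=\left[\begin{array}{ccc}1&0&0\\0&1&1\\ i&1&0\\ 0&i^{-1}&i\end{array}\right]$$ (the sudoku flag with datum $\Gamma_i=\begin{pmatrix}i&1\\0&i^{-1}\end{pmatrix}$, $\beta_i=i$). Then each $Z_i$ is a sudoku flag, and if $M_i$ is a sudoku solution generated by $Z_i$ for each $i\in S$, the collection $\{M_i\mid i\in S\}$ is a strongly orthogonal collection of sudoku solutions of order $q^2$ of size $|S|$.
   Context: Locations of a sudoku solution of order $q^2$ are identified with $(x_1,x_2,x_3,x_4)\in\mathbb{F}^4$: $x_1$ large row, $x_2$ row within the large row, $x_3$ large column, $x_4$ column within the large column; rows, columns and subsquares are the sets of locations with fixed $(x_1,x_2)$, $(x_3,x_4)$, $(x_1,x_3)$ respectively. A sudoku solution of order $q^2$ assigns symbols $\{0,\dots,q^2-1\}$ to locations so that each symbol occurs exactly once in every row, column and subsquare; two are orthogonal if upon superimposition each ordered pair of symbols occurs exactly once. Each symbol is $x=b_qq+b_1$ with radix digit $b_q$ and units digit $b_1$ in $\{0,\dots,q-1\}$; fix a bijection $\mathbb{F}\leftrightarrow\{0,\dots,q-1\}$ to record coordinates. A flag is a pair $(g,V)$ of subspaces of $\mathbb{F}^4$ with $\dim g=2$, $\dim V=3$, $g\subset V$; the notation $[v_1\ v_2\ v_3]$ (a $4\times3$ matrix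 with columns $v_1,v_2,v_3$) denotes $g=\langle v_1,v_2\rangle$, $V=\langle v_1,v_2,v_3\rangle$. It is a sudoku flag if every coset of $g$ meets every row, column and subsquare in exactly one location. A sudoku solution generated by a sudoku flag $(g,V)$ is a sudoku solution of order $q^2$ in which each coset of $g$ is exactly the set of locations of one symbol and each coset of $V$ is exactly the set of locations whose symbols have one given radix digit. An ordered orthogonal array $\mathrm{OOA}(4,s,2,v)$ is a $2s\times v^4$ array over an alphabet of size $v$ with rows labeled $(i,j)$, $1\le i\le s$, $j\in\{1,2\}$, such that for every top-justified set $T$ of $4$ rows ($(i,2)\in T\Rightarrow(i,1)\in T$) the subarray on the rows of $T$ contains each $4$-tuple exactly once as a column. For sudoku solutions $M_1,\dots,M_{m}$ of order $q^2$, the associated array is the $2(m+2)\times q^4$ array with one column per location $(x_1,x_2,x_3,x_4)$, with entries $x_1,x_2,x_3,x_4$ in rows $(1,1),(1,2),(2,1),(2,2)$ and the radix and units digits of the symbol of $M_k$ at that location in rows $(k+2,1),(k+2,2)$. A family of $m$ mutually orthogonal sudoku solutions is strongly orthogonal if its associated array is an $\mathrm{OOA}(4,m+2,2,q)$. *)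

theory Defs
  imports Complex_Main "HOL-Library.Product_Plus" "HOL-Library.FuncSet" "HOL-Library.Cardinality"
begin

text \<open>Locations of a sudoku of order q^2 are points (x1,x2,x3,x4) of F^4, F a finite
field with q = CARD('a) elements.\<close>

type_synonym 'a loc = "'a \<times> 'a \<times> 'a \<times> 'a"

definition sc :: "'a::field \<Rightarrow> 'a loc \<Rightarrow> 'a loc" where
  "sc c x = (case x of (a, b, d, e) \<Rightarrow> (c * a, c * b, c * d, c * e))"

definition subsp :: "'a::field loc set \<Rightarrow> bool" where
  "subsp W = module.subspace sc W"

definition spn :: "'a::field loc set \<Rightarrow> 'a loc set" where
  "spn A = module.span sc A"

definition dimen :: "'a::field loc set \<Rightarrow> nat" where
  "dimen W = vector_space.dim sc W"

definition is_flag :: "'a::field loc set \<Rightarrow> 'a loc set \<Rightarrow> bool" where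
  "is_flag g V \<longleftrightarrow> subsp g \<and> subsp V \<and> dimen g = 2 \<and> dimen V = 3 \<and> g \<subseteq> V"

text \<open>The flag denoted by the 4x3 matrix [v1 v2 v3].\<close>
definition flag_mat :: "'a::field loc \<Rightarrow> 'a loc \<Rightarrow> 'a loc \<Rightarrow> 'a loc set \<times> 'a loc set" where
  "flag_mat v1 v2 v3 = (spn {v1, v2}, spn {v1, v2, v3})"

definition coset :: "'a::field loc \<Rightarrow> 'a loc set \<Rightarrow> 'a loc set" where
  "coset p W = (\<lambda>w. p + w) ` W"

text \<open>Rows: fixed (x1,x2); columns: fixed (x3,x4); subsquares: fixed (x1,x3).\<close>
definition rows :: "'a loc set set" where
  "rows = {{x. fst x = a \<and> fst (snd x) = b} | a b. True}"

definition cols :: "'a loc set set" where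
  "cols = {{x. fst (snd (snd x)) = c \<and> snd (snd (snd x)) = d} | c d. True}"

definition boxes :: "'a loc set set" where
  "boxes = {{x. fst x = a \<and> fst (snd (snd x)) = c} | a c. True}"

definition regions :: "'a loc set set" where
  "regions = rows \<union> cols \<union> boxes"

definition sudoku_flag :: "'a::{finite,field} loc set \<times> 'a loc set \<Rightarrow> bool" where
  "sudoku_flag gV \<longleftrightarrow> is_flag (fst gV) (snd gV) \<and>
     (\<forall>p. \<forall>R\<in>regions. card (coset p (fst gV) \<inter> R) = 1)"

definition sudoku :: "('a::{finite,field} loc \<Rightarrow> nat) \<Rightarrow> bool" where
  "sudoku M \<longleftrightarrow> (\<forall>x. M x < (CARD('a))^2) \<and>
     (\<forall>R\<in>regions. \<forall>s. s < (CARD('a))^2 \<longrightarrow> card {x\<in>R. M x = s} = 1)"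

definition generated_by :: "('a::{finite,field} loc \<Rightarrow> nat) \<Rightarrow> 'a loc set \<times> 'a loc set \<Rightarrow> bool" where
  "generated_by M gV \<longleftrightarrow> sudoku M \<and>
     (\<forall>p. \<exists>s. coset p (fst gV) = {x. M x = s}) \<and>
     (\<forall>p. \<exists>d. coset p (snd gV) = {x. M x div CARD('a) = d})"

definition orthogonal :: "('a::{finite,field} loc \<Rightarrow> nat) \<Rightarrow> ('a loc \<Rightarrow> nat) \<Rightarrow> bool" where
  "orthogonal M N \<longleftrightarrow> (\<forall>s t. s < (CARD('a))^2 \<longrightarrow> t < (CARD('a))^2 \<longrightarrow> card {x. M x = s \<and> N x = t} = 1)"

text \<open>Ordered orthogonal array OOA(t,s,2,v): rows labelled (i,j), 1<=i<=s, j in {1,2};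
columns indexed by the finite set C (v^t columns); alphabet {0..<v}.\<close>
definition top_justified :: "(nat \<times> nat) set \<Rightarrow> bool" where
  "top_justified T \<longleftrightarrow> (\<forall>i. (i, 2) \<in> T \<longrightarrow> (i, 1) \<in> T)"

definition ooa :: "nat \<Rightarrow> nat \<Rightarrow> nat \<Rightarrow> 'c set \<Rightarrow> (nat \<times> nat \<Rightarrow> 'c \<Rightarrow> nat) \<Rightarrow> bool" where
  "ooa t s v C A \<longleftrightarrow> finite C \<and> card C = v ^ t \<and>
     (\<forall>r\<in>{1..s} \<times> {1,2}. \<forall>c\<in>C. A r c < v) \<and>
     (\<forall>T. T \<subseteq> {1..s} \<times> {1,2} \<and> card T = t \<and> top_justified T \<longrightarrow>
        bij_betw (\<lambda>c. restrict (\<lambda>r. A r c) T) C (T \<rightarrow>\<^sub>E {0..<v}))"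

text \<open>Associated array of M_1..M_m (Ms k for k = 1..m); enc is the fixed bijection
F -> {0..q-1} used to record coordinates.\<close>
definition assoc_array :: "('a::{finite,field} \<Rightarrow> nat) \<Rightarrow> (nat \<Rightarrow> 'a loc \<Rightarrow> nat) \<Rightarrow> nat \<times> nat \<Rightarrow> 'a loc \<Rightarrow> nat" where
  "assoc_array enc Ms r x = (case x of (x1, x2, x3, x4) \<Rightarrow>
     (if r = (1,1) then enc x1 else if r = (1,2) then enc x2
      else if r = (2,1) then enc x3 else if r = (2,2) then enc x4
      else if snd r = 1 then Ms (fst r - 2) x div CARD('a)
      else Ms (fst r - 2) x mod CARD('a)))"

definition strongly_orthogonal :: "('a::{finite,field} \<Rightarrow> nat) \<Rightarrow> nat \<Rightarrow> (nat \<Rightarrow> 'a loc \<Rightarrow> nat) \<Rightarrow> bool" where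
  "strongly_orthogonal enc m Ms \<longleftrightarrow>
     (\<forall>k\<in>{1..m}. sudoku (Ms k)) \<and>
     (\<forall>k\<in>{1..m}. \<forall>l\<in>{1..m}. k \<noteq> l \<longrightarrow> orthogonal (Ms k) (Ms l)) \<and>
     ooa 4 (m + 2) CARD('a) UNIV (assoc_array enc Ms)"

definition Zflag :: "'a::field \<Rightarrow> 'a loc set \<times> 'a loc set" where
  "Zflag i = flag_mat (1, 0, i, 0) (0, 1, 1, inverse i) (0, 1, 0, i)"

end

theory Submission
  imports Defs
begin


lemma sc_Pair[simp]: "sc c (a,b,d,e) = (c*a, c*b, c*d, c*e)" by (simp add: sc_def)

lemma zero4: "(0::'a::zero loc) = (0,0,0,0)" by (simp add: zero_prod_def)

lemma vs_sc: "vector_space (sc :: 'a::field \<Rightarrow> 'a loc \<Rightarrow> 'a loc)"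
  by unfold_locales (auto simp: sc_def algebra_simps split: prod.splits)

global_interpretation V: vector_space "sc :: 'a::field \<Rightarrow> 'a loc \<Rightarrow> 'a loc"
  by (rule vs_sc)

lemma spn2: "spn {v1, v2} = {sc a v1 + sc b v2 | a b. True}"
proof -
  have "x \<in> spn {v1, v2} \<longleftrightarrow> (\<exists>a b. x = sc a v1 + sc b v2)" for x
  proof -
    have "x \<in> spn {v1, v2} \<longleftrightarrow> (\<exists>a b. x - sc a v1 = sc b v2)"
      unfolding spn_def V.span_insert V.span_singleton by auto
    also have "\<dots> \<longleftrightarrow> (\<exists>a b. x = sc a v1 + sc b v2)"
      by (simp add: diff_eq_eq ac_simps)
    finally show ?thesis .
  qed
  then show ?thesis by blast
qed

lemma spn3: "spn {v1, v2, v3} = {sc a v1 + sc b v2 + sc c v3 | a b c. True}"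
proof -
  have "x \<in> spn {v1, v2, v3} \<longleftrightarrow> (\<exists>a b c. x = sc a v1 + sc b v2 + sc c v3)" for x
  proof -
    have "x \<in> spn {v1, v2, v3} \<longleftrightarrow> (\<exists>a. x - sc a v1 \<in> spn {v2, v3})"
      unfolding spn_def V.span_insert[of v1] by auto
    also have "\<dots> \<longleftrightarrow> (\<exists>a b c. x - sc a v1 = sc b v2 + sc c v3)"
      unfolding spn2 by (simp add: diff_eq_eq ac_simps)
    also have "\<dots> \<longleftrightarrow> (\<exists>a b c. x = sc a v1 + sc b v2 + sc c v3)"
      by (simp add: diff_eq_eq ac_simps)
    finally show ?thesis .
  qed
  then show ?thesis by blast
qed

definition Fp :: "'a::field \<Rightarrow> 'a loc \<Rightarrow> bool" where
  "Fp i x = (case x of (a,b,c,d) \<Rightarrow> c = i*a + b \<and> b = i*d)"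

definition Np :: "'a::field \<Rightarrow> 'a loc \<Rightarrow> bool" where
  "Np i x = (case x of (a,b,c,d) \<Rightarrow> i*(1-i^2)*a - i^2*b + (i^2-1)*c + i*d = 0)"

lemma Fp_simp[simp]: "Fp i (a,b,c,d) = (c = i*a + b \<and> b = i*d)" by (simp add: Fp_def)
lemma Np_simp[simp]: "Np i (a,b,c,d) = (i*(1-i^2)*a - i^2*b + (i^2-1)*c + i*d = 0)" by (simp add: Np_def)

lemma g_expl: "fst (Zflag i) = {(a, b, a*i+b, b*inverse i) | a b. True}"
  by (simp add: Zflag_def flag_mat_def spn2)

lemma V_expl: "snd (Zflag i) = {(a, b+c, a*i+b, b*inverse i + c*i) | a b c. True}"
  by (simp add: Zflag_def flag_mat_def spn3)

lemma g_eq: assumes i: "(i::'a::field) \<noteq> 0" shows "fst (Zflag i) = {x. Fp i x}"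
proof (unfold g_expl, intro set_eqI iffI)
  fix x assume "x \<in> {(a, b, a*i+b, b*inverse i) | a b. True}"
  then obtain a b where "x = (a, b, a*i+b, b*inverse i)" by blast
  then show "x \<in> {x. Fp i x}" using i by (simp add: field_simps)
next
  fix x assume "x \<in> {x. Fp i x}"
  moreover obtain x1 x2 x3 x4 where x: "x = (x1,x2,x3,x4)" by (cases x) auto
  ultimately have "x3 = i*x1 + x2" "x2 = i*x4" by auto
  then have "x = (x1, x2, x1*i+x2, x2*inverse i)" using x i by (simp add: field_simps)
  then show "x \<in> {(a, b, a*i+b, b*inverse i) | a b. True}" by blast
qed

lemma V_sub: assumes i: "(i::'a::field) \<noteq> 0" shows "snd (Zflag i) \<subseteq> {x. Np i x}"
proof
  fix x assume "x \<in> snd (Zflag i)"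
  then obtain a b c where "x = (a, b+c, a*i+b, b*inverse i + c*i)" unfolding V_expl by blast
  then show "x \<in> {x. Np i x}" using i by (simp add: field_simps power2_eq_square)
qed

lemma coset_iff: "coset p W = {z. z - p \<in> W}"
  unfolding coset_def by (auto simp: image_iff) (metis add_diff_cancel_left' diff_add_cancel add.commute)

lemma Zflag_is_flag: assumes i: "(i::'a::field) \<noteq> 0"
  shows "is_flag (fst (Zflag i)) (snd (Zflag i))"
proof -
  define v1 v2 v3 where "v1 = ((1::'a), (0::'a), i, (0::'a))" and "v2 = ((0::'a), (1::'a), (1::'a), inverse i)"
    and "v3 = ((0::'a), (1::'a), (0::'a), i)"
  have Z: "Zflag i = (spn {v1, v2}, spn {v1, v2, v3})" unfolding Zflag_def flag_mat_def v1_def v2_def v3_def ..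
  have ne: "v1 \<noteq> v2" "v1 \<noteq> v3" "v2 \<noteq> v3" "v2 \<noteq> 0" unfolding v1_def v2_def v3_def by (auto simp: zero4)
  have i2: "V.independent {v2}" using ne by (simp add: V.independent_insert)
  have "v1 \<notin> V.span {v2}" unfolding V.span_singleton v1_def v2_def by auto
  then have i12: "V.independent {v1, v2}" using i2 ne by (simp add: V.independent_insert)
  have "v3 \<notin> spn {v1, v2}" using g_eq[OF i] Z unfolding v3_def by auto
  then have i123: "V.independent {v3, v1, v2}" using i12 ne by (simp add: V.independent_insert spn_def)
  have e: "{v1, v2, v3} = {v3, v1, v2}" by auto
  have "dimen (spn {v1, v2}) = 2" unfolding dimen_def spn_def using V.dim_span_eq_card_independent[OF i12] ne by simp
  moreover have "dimen (spn {v1, v2, v3}) = 3" unfolding dimen_def spn_def e using V.dim_span_eq_card_independent[OF i123] ne by simp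
  moreover have "spn {v1, v2} \<subseteq> spn {v1, v2, v3}" unfolding spn_def by (rule V.span_mono) auto
  ultimately show ?thesis unfolding is_flag_def Z subsp_def spn_def by simp
qed

lemma card_single: assumes "P w" "\<And>z. P z \<Longrightarrow> z = w" shows "card {z. P z} = 1"
proof -
  have "{z. P z} = {w}" using assms by blast
  then show ?thesis by simp
qed

lemma coset_g: assumes i: "(i::'a::field) \<noteq> 0"
  shows "coset p (fst (Zflag i)) = {z. Fp i (z - p)}"
  unfolding coset_iff g_eq[OF i] by simp

lemma sudoku_flag_Z: assumes i: "(i::'a::{finite,field}) \<noteq> 0"
  shows "sudoku_flag (Zflag i)"
  unfolding sudoku_flag_def
proof (intro conjI allI ballI)
  show "is_flag (fst (Zflag i)) (snd (Zflag i))" by (rule Zflag_is_flag[OF i])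
  fix p :: "'a loc" and R :: "'a loc set" assume R: "R \<in> regions"
  obtain p1 p2 p3 p4 where p: "p = (p1,p2,p3,p4)" by (cases p) auto
  have F: "Fp i (z - p) \<longleftrightarrow> (fst (snd (snd z)) - p3 = i*(fst z - p1) + (fst (snd z) - p2)
     \<and> fst (snd z) - p2 = i*(snd (snd (snd z)) - p4))" for z
    by (cases z) (simp add: p)
  from R consider (r) a b where "R = {x. fst x = a \<and> fst (snd x) = b}"
    | (c) a b where "R = {x. fst (snd (snd x)) = a \<and> snd (snd (snd x)) = b}"
    | (b) a b where "R = {x. fst x = a \<and> fst (snd (snd x)) = b}"
    unfolding regions_def rows_def cols_def boxes_def by blast
  then show "card (coset p (fst (Zflag i)) \<inter> R) = 1"
  proof cases
    case r
    have eq: "coset p (fst (Zflag i)) \<inter> R = {z. Fp i (z - p) \<and> fst z = a \<and> fst (snd z) = b}"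
      unfolding coset_g[OF i] r by blast
    show ?thesis unfolding eq
    proof (rule card_single[where w = "(a, b, p3 + i*(a-p1) + (b-p2), p4 + (b-p2)/i)"])
      show "Fp i ((a, b, p3 + i*(a-p1) + (b-p2), p4 + (b-p2)/i) - p) \<and> fst (a, b, p3 + i*(a-p1) + (b-p2), p4 + (b-p2)/i) = a \<and> fst (snd (a, b, p3 + i*(a-p1) + (b-p2), p4 + (b-p2)/i)) = b"
        using i by (simp add: p field_simps)
      fix z assume "Fp i (z - p) \<and> fst z = a \<and> fst (snd z) = b"
      moreover obtain z1 z2 z3 z4 where z: "z = (z1,z2,z3,z4)" by (cases z) auto
      ultimately have h: "z3 - p3 = i*(z1-p1) + (z2-p2)" "z2 - p2 = i*(z4-p4)" "z1 = a" "z2 = b" by (auto simp: p)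
      have "z4 = p4 + (b-p2)/i" using h i by (simp add: field_simps)
      moreover have "z3 = p3 + i*(a-p1) + (b-p2)" using h by (simp add: algebra_simps)
      ultimately show "z = (a, b, p3 + i*(a-p1) + (b-p2), p4 + (b-p2)/i)" using h z by simp
    qed
  next
    case c
    define w2 where "w2 = p2 + i*(b - p4)"
    define w1 where "w1 = p1 + (a - p3 - (w2 - p2))/i"
    have eq: "coset p (fst (Zflag i)) \<inter> R = {z. Fp i (z - p) \<and> fst (snd (snd z)) = a \<and> snd (snd (snd z)) = b}"
      unfolding coset_g[OF i] c by blast
    show ?thesis unfolding eq
    proof (rule card_single[where w = "(w1, w2, a, b)"])
      show "Fp i ((w1, w2, a, b) - p) \<and> fst (snd (snd (w1, w2, a, b))) = a \<and> snd (snd (snd (w1, w2, a, b))) = b"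
        using i by (simp add: p w1_def w2_def field_simps)
      fix z assume "Fp i (z - p) \<and> fst (snd (snd z)) = a \<and> snd (snd (snd z)) = b"
      moreover obtain z1 z2 z3 z4 where z: "z = (z1,z2,z3,z4)" by (cases z) auto
      ultimately have h: "z3 - p3 = i*(z1-p1) + (z2-p2)" "z2 - p2 = i*(z4-p4)" "z3 = a" "z4 = b" by (auto simp: p)
      have h2: "z2 = w2" using h unfolding w2_def by (simp add: algebra_simps)
      have "z1 = w1" using h h2 i unfolding w1_def by (simp add: field_simps)
      then show "z = (w1, w2, a, b)" using h h2 z by simp
    qed
  next
    case b
    define w2 where "w2 = p2 + (b - p3) - i*(a - p1)"
    define w4 where "w4 = p4 + (w2 - p2)/i"
    have eq: "coset p (fst (Zflag i)) \<inter> R = {z. Fp i (z - p) \<and> fst z = a \<and> fst (snd (snd z)) = b}"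
      unfolding coset_g[OF i] b by blast
    show ?thesis unfolding eq
    proof (rule card_single[where w = "(a, w2, b, w4)"])
      show "Fp i ((a, w2, b, w4) - p) \<and> fst (a, w2, b, w4) = a \<and> fst (snd (snd (a, w2, b, w4))) = b"
        using i by (simp add: p w4_def w2_def field_simps)
      fix z assume "Fp i (z - p) \<and> fst z = a \<and> fst (snd (snd z)) = b"
      moreover obtain z1 z2 z3 z4 where z: "z = (z1,z2,z3,z4)" by (cases z) auto
      ultimately have h: "z3 - p3 = i*(z1-p1) + (z2-p2)" "z2 - p2 = i*(z4-p4)" "z1 = a" "z3 = b" by (auto simp: p)
      have h2: "z2 = w2" using h(1,3,4) unfolding w2_def by (simp add: algebra_simps)
      have "z4 = w4" using h h2 i unfolding w4_def by (simp add: field_simps)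
      then show "z = (a, w2, b, w4)" using h h2 z by simp
    qed
  qed
qed



lemma quad_zero:
  fixes i j k :: "'a::field"
  assumes d: "i \<noteq> j" "i \<noteq> k" "j \<noteq> k"
    and f: "\<alpha> + \<beta>*i + \<gamma>*i^2 = 0" "\<alpha> + \<beta>*j + \<gamma>*j^2 = 0" "\<alpha> + \<beta>*k + \<gamma>*k^2 = 0"
  shows "\<alpha> = 0 \<and> \<beta> = 0 \<and> \<gamma> = 0"
proof -
  have e1: "(i-j)*(\<beta> + \<gamma>*(i+j)) = (\<alpha> + \<beta>*i + \<gamma>*i^2) - (\<alpha> + \<beta>*j + \<gamma>*j^2)"
    by (simp add: algebra_simps power2_eq_square)
  have e2: "(i-k)*(\<beta> + \<gamma>*(i+k)) = (\<alpha> + \<beta>*i + \<gamma>*i^2) - (\<alpha> + \<beta>*k + \<gamma>*k^2)"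
    by (simp add: algebra_simps power2_eq_square)
  have g1: "\<beta> + \<gamma>*(i+j) = 0" using e1 f d by simp
  have g2: "\<beta> + \<gamma>*(i+k) = 0" using e2 f d by simp
  have "(j - k)*\<gamma> = (\<beta> + \<gamma>*(i+j)) - (\<beta> + \<gamma>*(i+k))" by (simp add: algebra_simps)
  then have "\<gamma> = 0" using g1 g2 d by simp
  then show ?thesis using g1 f by simp
qed

lemma cubic_zero:
  fixes i j k l :: "'a::field"
  assumes d: "i \<noteq> j" "i \<noteq> k" "i \<noteq> l" "j \<noteq> k" "j \<noteq> l" "k \<noteq> l"
    and f: "\<alpha> + \<beta>*i + \<gamma>*i^2 + \<delta>*i^3 = 0" "\<alpha> + \<beta>*j + \<gamma>*j^2 + \<delta>*j^3 = 0"
      "\<alpha> + \<beta>*k + \<gamma>*k^2 + \<delta>*k^3 = 0" "\<alpha> + \<beta>*l + \<gamma>*l^2 + \<delta>*l^3 = 0"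
  shows "\<alpha> = 0 \<and> \<beta> = 0 \<and> \<gamma> = 0 \<and> \<delta> = 0"
proof -
  define g where "g x y = \<beta> + \<gamma>*(x+y) + \<delta>*(x^2+x*y+y^2)" for x y
  have e: "(x-y)*g x y = (\<alpha> + \<beta>*x + \<gamma>*x^2 + \<delta>*x^3) - (\<alpha> + \<beta>*y + \<gamma>*y^2 + \<delta>*y^3)" for x y
    unfolding g_def by (simp add: algebra_simps power2_eq_square power3_eq_cube)
  have g1: "g i j = 0" using e[of i j] f d by simp
  have g2: "g i k = 0" using e[of i k] f d by simp
  have g3: "g i l = 0" using e[of i l] f d by simp
  define h where "h x y z = \<gamma> + \<delta>*(x+y+z)" for x y z
  have eh: "(y - z)*h x y z = g x y - g x z" for x y z
    unfolding g_def h_def by (simp add: algebra_simps power2_eq_square)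
  have h1: "h i j k = 0" using eh[of j k i] g1 g2 d by simp
  have h2: "h i j l = 0" using eh[of j l i] g1 g3 d by simp
  have "(k - l)*\<delta> = h i j k - h i j l" unfolding h_def by (simp add: algebra_simps)
  then have "\<delta> = 0" using h1 h2 d by simp
  then show ?thesis using h1 g1 f unfolding h_def g_def by simp
qed

abbreviation (input) NN :: "'a::field \<Rightarrow> 'a \<Rightarrow> 'a \<Rightarrow> 'a \<Rightarrow> 'a \<Rightarrow> bool" where
  "NN i a b c d \<equiv> i*(1-i^2)*a - i^2*b + (i^2-1)*c + i*d = 0"



lemma L_FF: fixes i j :: "'a::field" assumes "i \<noteq> j" "c = i*a + b" "b = i*d" "c = j*a + b" "b = j*d"
  shows "a = 0 \<and> b = 0 \<and> c = 0 \<and> d = 0"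
proof -
  have z1: "c - j*a - b = 0" using assms(4) by simp
  have z2: "c - i*a - b = 0" using assms(2) by simp
  have "(i - j)*a = (c - j*a - b) - (c - i*a - b)" by (simp add: algebra_simps)
  also have "\<dots> = 0" by (simp only: z1 z2 diff_zero)
  finally have a: "a = 0" using assms(1) by auto
  have z3: "b - j*d = 0" using assms(5) by simp
  have z4: "b - i*d = 0" using assms(3) by simp
  have "(i - j)*d = (b - j*d) - (b - i*d)" by (simp add: algebra_simps)
  also have "\<dots> = 0" by (simp only: z3 z4 diff_zero)
  finally have d: "d = 0" using assms(1) by auto
  have b: "b = 0" using assms(3) d by simp
  show ?thesis using a b d assms(2) by simp
qed

lemma mz: "x * y = 0 \<Longrightarrow> x \<noteq> 0 \<Longrightarrow> (y::'a::field) = 0" by simp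

lemma L6: fixes i j :: "'a::field" assumes "i \<noteq> j" "i*j \<noteq> -1" "a = 0" "b = 0"
  "NN i a b c d" "NN j a b c d"
  shows "a = 0 \<and> b = 0 \<and> c = 0 \<and> d = 0"
proof -
  have e1: "(i^2-1)*c + i*d = 0" using assms(3,4,5) by simp
  have e2: "(j^2-1)*c + j*d = 0" using assms(3,4,6) by simp
  have "((i-j)*(i*j+1))*c = j*((i^2-1)*c + i*d) - i*((j^2-1)*c + j*d)"
    by (simp add: algebra_simps power2_eq_square)
  also have "\<dots> = 0" by (simp only: e1 e2 mult_zero_right diff_zero)
  finally have P: "((i-j)*(i*j+1))*c = 0" .
  have n1: "i*j + 1 \<noteq> 0"
  proof
    assume "i*j + 1 = 0" then have "i*j = -1" by (simp add: eq_neg_iff_add_eq_0)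
    with assms(2) show False by simp
  qed
  have n2: "i - j \<noteq> 0" using assms(1) by simp
  have c: "c = 0" using mz[OF P] n1 n2 by simp
  have "(i - j)*d = (i*d + (i^2-1)*c) - (j*d + (j^2-1)*c)" using c by (simp add: algebra_simps)
  also have "\<dots> = 0" using e1 e2 by (simp add: add.commute)
  finally have "d = 0" using mz n2 by blast
  then show ?thesis using c assms(3,4) by simp
qed

lemma L8: fixes i j :: "'a::field" assumes "i \<noteq> 0" "j \<noteq> 0" "i \<noteq> j" "i*j \<noteq> -1" "c = 0" "d = 0"
  "NN i a b c d" "NN j a b c d"
  shows "a = 0 \<and> b = 0 \<and> c = 0 \<and> d = 0"
proof -
  have "i*((1-i^2)*a - i*b) = i*(1-i^2)*a - i^2*b + (i^2-1)*c + i*d" using assms(5,6)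
    by (simp add: algebra_simps power2_eq_square)
  then have "i*((1-i^2)*a - i*b) = 0" using assms(7) by simp
  then have e1: "(1-i^2)*a - i*b = 0" using assms(1) by simp
  have "j*((1-j^2)*a - j*b) = j*(1-j^2)*a - j^2*b + (j^2-1)*c + j*d" using assms(5,6)
    by (simp add: algebra_simps power2_eq_square)
  then have "j*((1-j^2)*a - j*b) = 0" using assms(8) by simp
  then have e2: "(1-j^2)*a - j*b = 0" using assms(2) by simp
  have "((j-i)*(1+i*j))*a = j*((1-i^2)*a - i*b) - i*((1-j^2)*a - j*b)"
    by (simp add: algebra_simps power2_eq_square)
  then have "((j-i)*(1+i*j))*a = 0" using e1 e2 by simp
  moreover have "1 + i*j \<noteq> 0" using assms(4) by (metis add_eq_0_iff add.commute)
  ultimately have a: "a = 0" using assms(3) by simp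
  then have "i*b = 0" using e1 by simp
  then show ?thesis using a assms(1,5,6) by simp
qed

lemma L10: fixes i j :: "'a::field" assumes "j \<noteq> 0" "i \<noteq> j" "a = 0" "c = i*a + b" "b = i*d"
  "NN j a b c d" shows "a = 0 \<and> b = 0 \<and> c = 0 \<and> d = 0"
proof -
  have cb: "c = i*d" "b = i*d" using assms(3,4,5) by simp_all
  have "(j - i)*d = j*(1-j^2)*a - j^2*b + (j^2-1)*c + j*d" using cb assms(3)
    by (simp add: algebra_simps power2_eq_square)
  then have "(j - i)*d = 0" using assms(6) by simp
  then have "d = 0" using assms(1,2) by simp
  then show ?thesis using assms(3) cb by simp
qed

lemma L11: fixes i j :: "'a::field" assumes "i \<noteq> 0" "j \<noteq> 0" "i \<noteq> j" "c = 0" "c = i*a + b" "b = i*d"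
  "NN j a b c d" shows "a = 0 \<and> b = 0 \<and> c = 0 \<and> d = 0"
proof -
  have b: "b = -(i*a)" using assms(4,5) by (simp add: eq_neg_iff_add_eq_0 add.commute)
  then have "i*d = i*(-a)" using assms(6) by simp
  then have "i*(d+a) = 0" by (simp add: algebra_simps)
  then have "d + a = 0" using assms(1) by simp
  then have d: "d = -a" by (simp add: eq_neg_iff_add_eq_0)
  have "j^2*(i - j)*a = j*(1-j^2)*a - j^2*b + (j^2-1)*c + j*d" using b d assms(4)
    by (simp add: algebra_simps power2_eq_square)
  then have "j^2*(i - j)*a = 0" using assms(7) by simp
  then have "a = 0" using assms(2,3) by simp
  then show ?thesis using b d assms(4) by simp
qed

lemma L12: fixes i j k :: "'a::field" assumes "j \<noteq> k" "i \<noteq> j" "i \<noteq> k"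
  "j + k \<noteq> 0" "c = i*a + b" "b = i*d" "NN j a b c d" "NN k a b c d"
  shows "a = 0 \<and> b = 0 \<and> c = 0 \<and> d = 0"
proof -
  have cb: "c = i*a + i*d" "b = i*d" using assms(5,6) by simp_all
  have r: "t*(1-t^2)*a - t^2*b + (t^2-1)*c + t*d = (t - i)*(a*(1-t^2) + d)" for t
    using cb by (simp add: algebra_simps power2_eq_square)
  have "(j - i)*(a*(1-j^2) + d) = 0" using r[of j] assms(7) by simp
  then have e1: "a*(1-j^2) + d = 0" using assms(2) by simp
  have "(k - i)*(a*(1-k^2) + d) = 0" using r[of k] assms(8) by simp
  then have e2: "a*(1-k^2) + d = 0" using assms(3) by simp
  have "a*((k-j)*(k+j)) = (a*(1-j^2) + d) - (a*(1-k^2) + d)" by (simp add: algebra_simps power2_eq_square)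
  then have "a*((k-j)*(k+j)) = 0" using e1 e2 by simp
  then have a: "a = 0" using assms(1,4) by (simp add: add.commute)
  then have "d = 0" using e1 by simp
  then show ?thesis using a cb by simp
qed

lemma L13: fixes i j :: "'a::field" assumes "i \<noteq> 0" "j \<noteq> 0" "i \<noteq> j" "a = 0" "c = 0"
  "NN i a b c d" "NN j a b c d" shows "a = 0 \<and> b = 0 \<and> c = 0 \<and> d = 0"
proof -
  have "t*(d - t*b) = t*(1-t^2)*a - t^2*b + (t^2-1)*c + t*d" for t using assms(4,5)
    by (simp add: algebra_simps power2_eq_square)
  then have "i*(d - i*b) = 0" "j*(d - j*b) = 0" using assms(6,7) by simp_all
  then have e: "d - i*b = 0" "d - j*b = 0" using assms(1,2) by simp_all
  have "(i - j)*b = (d - j*b) - (d - i*b)" by (simp add: algebra_simps)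
  then have "(i - j)*b = 0" using e by simp
  then have b: "b = 0" using assms(3) by simp
  then show ?thesis using e assms(4,5) by simp
qed

lemma L14: fixes i j k :: "'a::field" assumes "i \<noteq> j" "i \<noteq> k" "j \<noteq> k" "a = 0"
  "NN i a b c d" "NN j a b c d" "NN k a b c d" shows "a = 0 \<and> b = 0 \<and> c = 0 \<and> d = 0"
proof -
  have r: "t*(1-t^2)*a - t^2*b + (t^2-1)*c + t*d = (-c) + d*t + (c-b)*t^2" for t
    using assms(4) by (simp add: algebra_simps power2_eq_square)
  have X1: "(-c) + d*i + (c-b)*i^2 = 0" using assms(5) by (simp only: r)
  have X2: "(-c) + d*j + (c-b)*j^2 = 0" using assms(6) by (simp only: r)
  have X3: "(-c) + d*k + (c-b)*k^2 = 0" using assms(7) by (simp only: r)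
  have "-c = 0 \<and> d = 0 \<and> c - b = 0" using quad_zero[OF assms(1-3) X1 X2 X3] .
  then show ?thesis using assms(4) by auto
qed

lemma L15: fixes i j k :: "'a::field" assumes "i \<noteq> 0" "j \<noteq> 0" "k \<noteq> 0" "i \<noteq> j" "i \<noteq> k" "j \<noteq> k" "c = 0"
  "NN i a b c d" "NN j a b c d" "NN k a b c d" shows "a = 0 \<and> b = 0 \<and> c = 0 \<and> d = 0"
proof -
  have r: "t*(1-t^2)*a - t^2*b + (t^2-1)*c + t*d = t*((a+d) + (-b)*t + (-a)*t^2)" for t
    using assms(7) by (simp add: algebra_simps power2_eq_square)
  have "(a+d) + (-b)*i + (-a)*i^2 = 0" using r[of i] assms(1,8) by simp
  moreover have "(a+d) + (-b)*j + (-a)*j^2 = 0" using r[of j] assms(2,9) by simp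
  moreover have "(a+d) + (-b)*k + (-a)*k^2 = 0" using r[of k] assms(3,10) by simp
  ultimately have "a + d = 0 \<and> -b = 0 \<and> -a = 0" using quad_zero[OF assms(4-6)] by blast
  then have "a = 0" "b = 0" "a + d = 0" by auto
  then show ?thesis using assms(7) by auto
qed

lemma L16: fixes i j k l :: "'a::field" assumes "i \<noteq> j" "i \<noteq> k" "i \<noteq> l" "j \<noteq> k" "j \<noteq> l" "k \<noteq> l"
  "NN i a b c d" "NN j a b c d" "NN k a b c d" "NN l a b c d" shows "a = 0 \<and> b = 0 \<and> c = 0 \<and> d = 0"
proof -
  have r: "t*(1-t^2)*a - t^2*b + (t^2-1)*c + t*d = (-c) + (a+d)*t + (c-b)*t^2 + (-a)*t^3" for t
    by (simp add: algebra_simps power2_eq_square power3_eq_cube)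
  have X1: "(-c) + (a+d)*i + (c-b)*i^2 + (-a)*i^3 = 0" using assms(7) by (simp only: r)
  have X2: "(-c) + (a+d)*j + (c-b)*j^2 + (-a)*j^3 = 0" using assms(8) by (simp only: r)
  have X3: "(-c) + (a+d)*k + (c-b)*k^2 + (-a)*k^3 = 0" using assms(9) by (simp only: r)
  have X4: "(-c) + (a+d)*l + (c-b)*l^2 + (-a)*l^3 = 0" using assms(10) by (simp only: r)
  have "-c = 0 \<and> a+d = 0 \<and> c - b = 0 \<and> -a = 0" using cubic_zero[OF assms(1-6) X1 X2 X3 X4] .
  then have "a = 0" "c = 0" "a + d = 0" "c - b = 0" by auto
  then show ?thesis by auto
qed



datatype 'a grp = G1 | G2 | Gf 'a

fun sing :: "'a::field grp \<Rightarrow> 'a loc \<Rightarrow> bool" where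
  "sing G1 w = (fst w = 0)"
| "sing G2 w = (fst (snd (snd w)) = 0)"
| "sing (Gf i) w = Np i w"

fun full :: "'a::field grp \<Rightarrow> 'a loc \<Rightarrow> bool" where
  "full G1 w = (fst w = 0 \<and> fst (snd w) = 0)"
| "full G2 w = (fst (snd (snd w)) = 0 \<and> snd (snd (snd w)) = 0)"
| "full (Gf i) w = Fp i w"

definition good :: "'a::field set \<Rightarrow> bool" where
  "good S \<longleftrightarrow> 0 \<notin> S \<and> (\<forall>i\<in>S. \<forall>j\<in>S. i \<noteq> j \<longrightarrow> i + j \<noteq> 0) \<and> (\<forall>i\<in>S. \<forall>j\<in>S. i \<noteq> j \<longrightarrow> i * j \<noteq> - 1)"

definition valid :: "'a set \<Rightarrow> 'a grp \<Rightarrow> bool" where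
  "valid S g \<longleftrightarrow> (\<forall>i. g = Gf i \<longrightarrow> i \<in> S)"


lemma good_D: assumes "good S" "i \<in> S" "j \<in> S" "i \<noteq> j"
  shows "i \<noteq> 0" "i + j \<noteq> 0" "i * j \<noteq> -1"
  using assms unfolding good_def by metis+

lemma good_0: "good S \<Longrightarrow> i \<in> S \<Longrightarrow> i \<noteq> 0" unfolding good_def by metis

lemma valid_Gf: "valid S (Gf i) \<Longrightarrow> good S \<Longrightarrow> i \<noteq> 0"
  unfolding valid_def using good_0 by blast


lemma lemA: assumes S: "good S" and v: "valid S g" "valid S h" and gh: "g \<noteq> h"
  and f: "full g w" "full h w" shows "w = 0"
proof -
  obtain a b c d where w: "w = (a,b,c,d)" by (cases w) auto
  have f': "full g (a,b,c,d)" "full h (a,b,c,d)" using f w by simp_all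
  have "a = 0 \<and> b = 0 \<and> c = 0 \<and> d = 0"
  proof (cases g)
    case G1
    then show ?thesis
    proof (cases h)
      case G1 then show ?thesis using gh \<open>g = G1\<close> by simp
    next
      case G2 then show ?thesis using f' \<open>g = G1\<close> by simp
    next
      case (Gf i) then have "i \<noteq> 0" using v(2) S valid_Gf by simp
      then show ?thesis using f'(1) f'(2) \<open>g = G1\<close> Gf by auto
    qed
  next
    case G2
    then show ?thesis
    proof (cases h)
      case G1 then show ?thesis using f' \<open>g = G2\<close> by simp
    next
      case G2 then show ?thesis using gh \<open>g = G2\<close> by simp
    next
      case (Gf i) then have "i \<noteq> 0" using v(2) S valid_Gf by simp
      have "c = 0 \<and> d = 0" using f'(1) \<open>g = G2\<close> by simp
      moreover have "c = i*a + b \<and> b = i*d" using f'(2) Gf by simp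
      ultimately show ?thesis using \<open>i \<noteq> 0\<close> by auto
    qed
  next
    case (Gf i)
    then show ?thesis
    proof (cases h)
      case G1 then have "i \<noteq> 0" using v(1) S valid_Gf \<open>g = Gf i\<close> by simp
      then show ?thesis using f'(1) f'(2) \<open>g = Gf i\<close> G1 by auto
    next
      case G2 then have "i \<noteq> 0" using v(1) S valid_Gf \<open>g = Gf i\<close> by simp
      have "c = 0 \<and> d = 0" using f'(2) G2 by simp
      moreover have "c = i*a + b \<and> b = i*d" using f'(1) \<open>g = Gf i\<close> by simp
      ultimately show ?thesis using \<open>i \<noteq> 0\<close> by auto
    next
      case (Gf j)
      have "i \<noteq> j" using gh \<open>g = Gf i\<close> Gf by simp
      have "c = i*a + b \<and> b = i*d" using f'(1) \<open>g = Gf i\<close> by simp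
      moreover have "c = j*a + b \<and> b = j*d" using f'(2) Gf by simp
      ultimately show ?thesis using L_FF[OF \<open>i \<noteq> j\<close>] by blast
    qed
  qed
  then show ?thesis using w by (simp add: zero4)
qed


lemma card_grp: assumes "finite P"
  shows "card P = (if G1 \<in> P then 1 else 0) + (if G2 \<in> P then 1 else 0) + card {i. Gf i \<in> P}"
proof -
  have fin: "finite {i. Gf i \<in> P}" using finite_vimageI[OF assms, of Gf] by (simp add: vimage_def inj_def)
  have P: "P = (P \<inter> {G1, G2}) \<union> Gf ` {i. Gf i \<in> P}"
  proof (rule set_eqI)
    fix x show "x \<in> P \<longleftrightarrow> x \<in> (P \<inter> {G1, G2}) \<union> Gf ` {i. Gf i \<in> P}" by (cases x) auto
  qed
  have disj: "(P \<inter> {G1, G2}) \<inter> Gf ` {i. Gf i \<in> P} = {}" by auto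
  have c1: "card (P \<inter> {G1, G2}) = (if G1 \<in> P then 1 else 0) + (if G2 \<in> P then 1 else 0)"
  proof -
    have "P \<inter> {G1, G2} = (if G1 \<in> P then {G1} else {}) \<union> (if G2 \<in> P then {G2} else {})" by auto
    then show ?thesis by (auto simp: card_insert_if)
  qed
  have c2: "card (Gf ` {i. Gf i \<in> P}) = card {i. Gf i \<in> P}" by (rule card_image) (simp add: inj_on_def)
  have "card P = card (P \<inter> {G1, G2}) + card (Gf ` {i. Gf i \<in> P})"
    by (subst P, rule card_Un_disjoint) (use fin disj in auto)
  then show ?thesis using c1 c2 by simp
qed



lemma lemB: fixes S :: "'a::field set"
  assumes S: "good S" and vP: "\<forall>h\<in>P1. valid S h" and vg: "valid S g" and gP: "g \<notin> P1"
    and cP: "card P1 = 2" and fg: "full g w" and sP: "\<forall>h\<in>P1. sing h w"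
  shows "w = 0"
proof -
  obtain a b c d where w: "w = (a,b,c,d)" by (cases w) auto
  have fg': "full g (a,b,c,d)" using fg w by simp
  have sP': "\<forall>h\<in>P1. sing h (a,b,c,d)" using sP w by simp
  have fin: "finite P1" using cP by (simp add: card_ge_0_finite)
  define Fl where "Fl = {i. Gf i \<in> P1}"
  have ce: "card P1 = (if G1 \<in> P1 then 1 else 0) + (if G2 \<in> P1 then 1 else 0) + card Fl"
    unfolding Fl_def by (rule card_grp[OF fin])
  have FlS: "i \<in> S" if "i \<in> Fl" for i using that vP unfolding Fl_def valid_def by auto
  have FlN: "NN i a b c d" if "i \<in> Fl" for i using that sP' unfolding Fl_def by fastforce
  have s1: "a = 0" if "G1 \<in> P1" using that sP' by fastforce
  have s2: "c = 0" if "G2 \<in> P1" using that sP' by fastforce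
  have "a = 0 \<and> b = 0 \<and> c = 0 \<and> d = 0"
  proof (cases g)
    case G1
    then have ab: "a = 0" "b = 0" using fg' by simp_all
    have "G1 \<notin> P1" using gP G1 by simp
    show ?thesis
    proof (cases "G2 \<in> P1")
      case True
      then have "card Fl = 1" using ce cP \<open>G1 \<notin> P1\<close> by simp
      then obtain i where "Fl = {i}" by (rule card_1_singletonE)
      then have i: "i \<in> S" "NN i a b c d" using FlS FlN by auto
      have "i \<noteq> 0" using good_0[OF S i(1)] .
      then show ?thesis using i(2) ab s2[OF True] by simp
    next
      case False
      then have "card Fl = 2" using ce cP \<open>G1 \<notin> P1\<close> by simp
      then obtain i j where ij: "Fl = {i, j}" "i \<noteq> j" by (auto simp: card_2_iff)
      then have "i \<in> S" "j \<in> S" using FlS by auto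
      then have "i * j \<noteq> -1" using good_D(3)[OF S _ _ ij(2)] by blast
      then show ?thesis using L6[OF ij(2) _ ab] FlN ij(1) by blast
    qed
  next
    case G2
    then have cd: "c = 0" "d = 0" using fg' by simp_all
    have "G2 \<notin> P1" using gP G2 by simp
    show ?thesis
    proof (cases "G1 \<in> P1")
      case True
      then have "card Fl = 1" using ce cP \<open>G2 \<notin> P1\<close> by simp
      then obtain i where "Fl = {i}" by (rule card_1_singletonE)
      then have i: "i \<in> S" "NN i a b c d" using FlS FlN by auto
      have "i \<noteq> 0" using good_0[OF S i(1)] .
      then show ?thesis using i(2) cd s1[OF True] by simp
    next
      case False
      then have "card Fl = 2" using ce cP \<open>G2 \<notin> P1\<close> by simp
      then obtain i j where ij: "Fl = {i, j}" "i \<noteq> j" by (auto simp: card_2_iff)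
      then have ijS: "i \<in> S" "j \<in> S" using FlS by auto
      then have "i * j \<noteq> -1" using good_D(3)[OF S _ _ ij(2)] by blast
      then show ?thesis using L8[OF good_0[OF S ijS(1)] good_0[OF S ijS(2)] ij(2) _ cd] FlN ij(1) by blast
    qed
  next
    case (Gf i)
    then have iS: "i \<in> S" using vg unfolding valid_def by simp
    have i0: "i \<noteq> 0" using good_0[OF S iS] .
    have F: "c = i*a + b" "b = i*d" using fg' Gf by simp_all
    have iFl: "i \<notin> Fl" using gP Gf unfolding Fl_def by simp
    show ?thesis
    proof (cases "G1 \<in> P1"; cases "G2 \<in> P1")
      assume A: "G1 \<in> P1" "G2 \<in> P1"
      then show ?thesis using F s1 s2 i0 by simp
    next
      assume A: "G1 \<in> P1" "G2 \<notin> P1"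
      then have "card Fl = 1" using ce cP by simp
      then obtain j where "Fl = {j}" by (rule card_1_singletonE)
      then have j: "j \<in> S" "NN j a b c d" "i \<noteq> j" using FlS FlN iFl by auto
      show ?thesis using L10[OF good_0[OF S j(1)] j(3) s1[OF A(1)] F j(2)] .
    next
      assume A: "G1 \<notin> P1" "G2 \<in> P1"
      then have "card Fl = 1" using ce cP by simp
      then obtain j where "Fl = {j}" by (rule card_1_singletonE)
      then have j: "j \<in> S" "NN j a b c d" "i \<noteq> j" using FlS FlN iFl by auto
      show ?thesis using L11[OF i0 good_0[OF S j(1)] j(3) s2[OF A(2)] F j(2)] .
    next
      assume A: "G1 \<notin> P1" "G2 \<notin> P1"
      then have "card Fl = 2" using ce cP by simp
      then obtain j k where jk: "Fl = {j, k}" "j \<noteq> k" by (auto simp: card_2_iff)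
      then have jkS: "j \<in> S" "k \<in> S" "i \<noteq> j" "i \<noteq> k" using FlS iFl by auto
      have "j + k \<noteq> 0" using good_D(2)[OF S jkS(1,2) jk(2)] .
      then show ?thesis using L12[OF jk(2) jkS(3,4) _ F] FlN jk(1) by blast
    qed
  qed
  then show ?thesis using w by (simp add: zero4)
qed

lemma lemC: fixes S :: "'a::field set"
  assumes S: "good S" and vP: "\<forall>h\<in>P. valid S h" and cP: "card P = 4" and sP: "\<forall>h\<in>P. sing h w"
  shows "w = 0"
proof -
  obtain a b c d where w: "w = (a,b,c,d)" by (cases w) auto
  have sP': "\<forall>h\<in>P. sing h (a,b,c,d)" using sP w by simp
  have fin: "finite P" using cP by (simp add: card_ge_0_finite)
  define Fl where "Fl = {i. Gf i \<in> P}"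
  have ce: "card P = (if G1 \<in> P then 1 else 0) + (if G2 \<in> P then 1 else 0) + card Fl"
    unfolding Fl_def by (rule card_grp[OF fin])
  have FlS: "i \<in> S" if "i \<in> Fl" for i using that vP unfolding Fl_def valid_def by auto
  have FlN: "NN i a b c d" if "i \<in> Fl" for i using that sP' unfolding Fl_def by fastforce
  have s1: "a = 0" if "G1 \<in> P" using that sP' by fastforce
  have s2: "c = 0" if "G2 \<in> P" using that sP' by fastforce
  have "a = 0 \<and> b = 0 \<and> c = 0 \<and> d = 0"
  proof (cases "G1 \<in> P"; cases "G2 \<in> P")
    assume A: "G1 \<in> P" "G2 \<in> P"
    then have "card Fl = 2" using ce cP by simp
    then obtain i j where ij: "Fl = {i, j}" "i \<noteq> j" by (auto simp: card_2_iff)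
    then have ijS: "i \<in> S" "j \<in> S" using FlS by auto
    show ?thesis using L13[OF good_0[OF S ijS(1)] good_0[OF S ijS(2)] ij(2) s1[OF A(1)] s2[OF A(2)]] FlN ij(1) by blast
  next
    assume A: "G1 \<in> P" "G2 \<notin> P"
    then have "card Fl = 3" using ce cP by simp
    then obtain i j k where ijk: "Fl = {i, j, k}" "i \<noteq> j" "j \<noteq> k" "i \<noteq> k" by (auto simp: card_3_iff)
    show ?thesis using L14[OF ijk(2) ijk(4) ijk(3) s1[OF A(1)]] FlN ijk(1) by blast
  next
    assume A: "G1 \<notin> P" "G2 \<in> P"
    then have "card Fl = 3" using ce cP by simp
    then obtain i j k where ijk: "Fl = {i, j, k}" "i \<noteq> j" "j \<noteq> k" "i \<noteq> k" by (auto simp: card_3_iff)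
    then have ijkS: "i \<in> S" "j \<in> S" "k \<in> S" using FlS by auto
    show ?thesis using L15[OF good_0[OF S ijkS(1)] good_0[OF S ijkS(2)] good_0[OF S ijkS(3)] ijk(2) ijk(4) ijk(3) s2[OF A(2)]] FlN ijk(1) by blast
  next
    assume A: "G1 \<notin> P" "G2 \<notin> P"
    then have c4: "card Fl = Suc 3" using ce cP by simp
    obtain i B where B: "Fl = insert i B" "i \<notin> B" "card B = 3" using card_eq_SucD[OF c4] by blast
    then obtain j k l where jkl: "B = {j, k, l}" "j \<noteq> k" "k \<noteq> l" "j \<noteq> l" by (auto simp: card_3_iff)
    have d: "i \<noteq> j" "i \<noteq> k" "i \<noteq> l" using B(2) jkl(1) by auto
    show ?thesis using L16[OF d jkl(2) jkl(4) jkl(3)] FlN B(1) jkl(1) by blast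
  qed
  then show ?thesis using w by (simp add: zero4)
qed



lemma lemMain: fixes S :: "'a::field set"
  assumes S: "good S" and f1: "finite P1" and f2: "finite P2" and dj: "P1 \<inter> P2 = {}"
    and v1: "\<forall>h\<in>P1. valid S h" and v2: "\<forall>h\<in>P2. valid S h"
    and c: "2 * card P2 + card P1 = 4"
    and s1: "\<forall>h\<in>P1. sing h w" and s2: "\<forall>h\<in>P2. full h w"
  shows "w = 0"
proof -
  have "card P2 = 0 \<or> card P2 = 1 \<or> card P2 = 2" using c by linarith
  then consider "card P2 = 0" | "card P2 = 1" | "card P2 = 2" by auto
  then show ?thesis
  proof cases
    case 1
    then have "card P1 = 4" using c by simp
    then show ?thesis using lemC[OF S v1 _ s1] by blast
  next
    case 2
    then obtain g where g: "P2 = {g}" by (rule card_1_singletonE)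
    have "card P1 = 2" using c 2 by simp
    moreover have "g \<notin> P1" using dj g by auto
    ultimately show ?thesis using lemB[OF S v1 _ _ _ _ s1] v2 s2 g by simp
  next
    case 3
    then obtain g h where gh: "P2 = {g, h}" "g \<noteq> h" by (auto simp: card_2_iff)
    then show ?thesis using lemA[OF S _ _ gh(2)] v2 s2 by simp
  qed
qed

lemma lemT: fixes S :: "'a::field set" and T :: "(nat \<times> nat) set"
  assumes S: "good S" and T: "T \<subseteq> {1..s} \<times> {1,2}" and cT: "card T = 4" and tj: "top_justified T"
    and inj: "inj_on \<gamma> {1..s}" and v: "\<forall>k\<in>{1..s}. valid S (\<gamma> k)"
    and s1: "\<forall>k. (k,1) \<in> T \<longrightarrow> sing (\<gamma> k) w" and s2: "\<forall>k. (k,2) \<in> T \<longrightarrow> full (\<gamma> k) w"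
  shows "w = 0"
proof -
  define K2 where "K2 = {k. (k,2) \<in> T}"
  define K1 where "K1 = {k. (k,1) \<in> T \<and> (k,2) \<notin> T}"
  have K2s: "K2 \<subseteq> {1..s}" using T unfolding K2_def by auto
  have K1s: "K1 \<subseteq> {1..s}" using T unfolding K1_def by auto
  have fK2: "finite K2" using K2s finite_subset by blast
  have fK1: "finite K1" using K1s finite_subset by blast
  have Teq: "T = K2 \<times> {1,2} \<union> K1 \<times> {1}"
  proof (rule set_eqI)
    fix x :: "nat \<times> nat"
    obtain k j where x: "x = (k,j)" by (cases x)
    show "x \<in> T \<longleftrightarrow> x \<in> K2 \<times> {1,2} \<union> K1 \<times> {1}"
      using T tj unfolding x K1_def K2_def top_justified_def by auto
  qed
  have "card T = card (K2 \<times> {1::nat,2}) + card (K1 \<times> {1::nat})"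
    unfolding Teq by (rule card_Un_disjoint) (use fK1 fK2 in \<open>auto simp: K1_def K2_def\<close>)
  then have c: "2 * card K2 + card K1 = 4" using cT by (simp add: card_cartesian_product)
  have dK: "K1 \<inter> K2 = {}" unfolding K1_def K2_def by auto
  have ci2: "card (\<gamma> ` K2) = card K2" using card_image inj_on_subset[OF inj K2s] by blast
  have ci1: "card (\<gamma> ` K1) = card K1" using card_image inj_on_subset[OF inj K1s] by blast
  have dj: "\<gamma> ` K1 \<inter> \<gamma> ` K2 = {}"
  proof (rule ccontr)
    assume "\<gamma> ` K1 \<inter> \<gamma> ` K2 \<noteq> {}"
    then obtain k l where kl: "k \<in> K1" "l \<in> K2" "\<gamma> k = \<gamma> l" by auto
    then have "k = l" using inj K1s K2s by (auto dest: inj_onD)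
    then show False using kl dK by auto
  qed
  show ?thesis
  proof (rule lemMain[OF S _ _ dj])
    show "finite (\<gamma> ` K1)" "finite (\<gamma> ` K2)" using fK1 fK2 by auto
    show "\<forall>h\<in>\<gamma> ` K1. valid S h" "\<forall>h\<in>\<gamma> ` K2. valid S h" using v K1s K2s by auto
    show "2 * card (\<gamma> ` K2) + card (\<gamma> ` K1) = 4" using c ci1 ci2 by simp
    show "\<forall>h\<in>\<gamma> ` K1. sing h w" using s1 unfolding K1_def by auto
    show "\<forall>h\<in>\<gamma> ` K2. full h w" using s2 unfolding K2_def by auto
  qed
qed



lemma g_zero: "(i::'a::field) \<noteq> 0 \<Longrightarrow> 0 \<in> fst (Zflag i)"
  using g_eq[of i] by (simp add: zero4)

lemma V_zero: "0 \<in> snd (Zflag i)"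
  unfolding Zflag_def flag_mat_def spn_def by (simp add: V.span_zero)

lemma gen_g_iff: fixes N :: "'a::{finite,field} loc \<Rightarrow> nat"
  assumes gen: "generated_by N (Zflag i)" and i: "i \<noteq> 0"
  shows "N y = N x \<longleftrightarrow> Fp i (y - x)"
proof -
  obtain s where cs: "coset x (fst (Zflag i)) = {z. N z = s}" using gen unfolding generated_by_def by blast
  have "x \<in> coset x (fst (Zflag i))" using g_zero[OF i] unfolding coset_iff by simp
  then have "N x = s" using cs by blast
  then have "N y = N x \<longleftrightarrow> y \<in> coset x (fst (Zflag i))" using cs by blast
  also have "\<dots> \<longleftrightarrow> Fp i (y - x)" unfolding coset_g[OF i] by simp
  finally show ?thesis .
qed

lemma gen_V: fixes N :: "'a::{finite,field} loc \<Rightarrow> nat"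
  assumes gen: "generated_by N (Zflag i)" and i: "i \<noteq> 0"
    and eq: "N y div CARD('a) = N x div CARD('a)"
  shows "Np i (y - x)"
proof -
  obtain d where cs: "coset x (snd (Zflag i)) = {z. N z div CARD('a) = d}" using gen unfolding generated_by_def by blast
  have "x \<in> coset x (snd (Zflag i))" using V_zero unfolding coset_iff by simp
  then have "N x div CARD('a) = d" using cs by blast
  then have "y \<in> coset x (snd (Zflag i))" using cs eq by blast
  then have "y - x \<in> snd (Zflag i)" unfolding coset_iff by simp
  then show ?thesis using V_sub[OF i] by blast
qed

lemma A_vals:
  fixes enc :: "'a::{finite,field} \<Rightarrow> nat"
  shows "assoc_array enc Ms (1,1) (x1,x2,x3,x4) = enc x1"
    "assoc_array enc Ms (1,2) (x1,x2,x3,x4) = enc x2"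
    "assoc_array enc Ms (2,1) (x1,x2,x3,x4) = enc x3"
    "assoc_array enc Ms (2,2) (x1,x2,x3,x4) = enc x4"
    "k \<ge> 3 \<Longrightarrow> assoc_array enc Ms (k,1) x = Ms (k-2) x div CARD('a)"
    "k \<ge> 3 \<Longrightarrow> assoc_array enc Ms (k,2) x = Ms (k-2) x mod CARD('a)"
  by (auto simp: assoc_array_def split: prod.splits)



lemma restrict_eq_iff: "restrict f A = restrict g A \<longleftrightarrow> (\<forall>x\<in>A. f x = g x)"
  by (metis restrict_apply' restrict_ext)

lemma ooa_main:
  fixes S :: "'a::{finite,field} set" and enc :: "'a \<Rightarrow> nat" and M :: "'a \<Rightarrow> 'a loc \<Rightarrow> nat"
  assumes S: "good S" and enc: "bij_betw enc UNIV {0..<CARD('a)}"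
    and gen: "\<forall>i\<in>S. generated_by (M i) (Zflag i)" and e: "bij_betw e {1..m} S"
  shows "ooa 4 (m+2) CARD('a) UNIV (assoc_array enc (\<lambda>k. M (e k)))"
proof -
  define q where "q = CARD('a)"
  define A where "A = assoc_array enc (\<lambda>k. M (e k))"
  have qpos: "q > 0" unfolding q_def by simp
  have eS: "e k \<in> S" if "k \<in> {1..m}" for k using e that by (rule bij_betw_apply)
  have e0: "e k \<noteq> 0" if "k \<in> {1..m}" for k using good_0[OF S eS[OF that]] .
  have genk: "generated_by (M (e k)) (Zflag (e k))" if "k \<in> {1..m}" for k using gen eS[OF that] by blast
  have Mlt: "M (e k) x < q^2" if "k \<in> {1..m}" for k x
    using genk[OF that] unfolding generated_by_def sudoku_def q_def by blast
  have encl: "enc x < q" for x using bij_betw_apply[OF enc, of x] unfolding q_def by simp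
  have encinj: "enc x = enc y \<Longrightarrow> x = y" for x y using bij_betw_imp_inj_on[OF enc] by (simp add: inj_eq)
  have A5: "A (k,1) c = M (e (k-2)) c div q" if "k \<ge> 3" for k c
    unfolding A_def q_def by (rule A_vals(5)[OF that])
  have A6: "A (k,2) c = M (e (k-2)) c mod q" if "k \<ge> 3" for k c
    unfolding A_def q_def by (rule A_vals(6)[OF that])
  have A14: "A (1,1) (x1,x2,x3,x4) = enc x1" "A (1,2) (x1,x2,x3,x4) = enc x2"
    "A (2,1) (x1,x2,x3,x4) = enc x3" "A (2,2) (x1,x2,x3,x4) = enc x4" for x1 x2 x3 x4
    unfolding A_def by (rule A_vals)+
  have vals: "A r c < q" if "r \<in> {1..m+2} \<times> {1,2}" for r c
  proof -
    obtain k j where r: "r = (k,j)" by (cases r)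
    obtain x1 x2 x3 x4 where c: "c = (x1,x2,x3,x4)" by (cases c) auto
    have kj: "k \<in> {1..m+2}" "j = 1 \<or> j = 2" using that r by auto
    show ?thesis
    proof (cases "k \<ge> 3")
      case True
      then have km: "k - 2 \<in> {1..m}" using kj by auto
      show ?thesis
      proof (cases "j = 1")
        case True
        have "M (e (k-2)) c < q * q" using Mlt[OF km] by (simp add: power2_eq_square)
        then have "M (e (k-2)) c div q < q" by (rule less_mult_imp_div_less)
        then show ?thesis using True r A5[OF \<open>k \<ge> 3\<close>, of c] by simp
      next
        case False
        then have "j = 2" using kj by simp
        then show ?thesis using r qpos A6[OF \<open>k \<ge> 3\<close>, of c] by simp
      qed
    next
      case False
      then have "k = 1 \<or> k = 2" using kj by auto
      then show ?thesis using kj r c encl A14 by auto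
    qed
  qed
  have cardU: "card (UNIV :: 'a loc set) = q ^ 4"
    unfolding q_def by (simp add: card_UNIV_def[symmetric] eval_nat_numeral)
  define \<gamma> where "\<gamma> k = (if k = 1 then G1 else if k = 2 then G2 else Gf (e (k - 2)))" for k
  have inj\<gamma>: "inj_on \<gamma> {1..m+2}"
  proof (rule inj_onI)
    fix k l assume kl: "k \<in> {1..m+2}" "l \<in> {1..m+2}" "\<gamma> k = \<gamma> l"
    show "k = l"
    proof (cases "k \<ge> 3 \<and> l \<ge> 3")
      case True
      then have "e (k-2) = e (l-2)" using kl(3) unfolding \<gamma>_def by auto
      moreover have "k - 2 \<in> {1..m}" "l - 2 \<in> {1..m}" using True kl by auto
      ultimately have "k - 2 = l - 2" using bij_betw_imp_inj_on[OF e] by (auto dest: inj_onD)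
      then show ?thesis using True by linarith
    next
      case False
      then show ?thesis using kl unfolding \<gamma>_def by (auto split: if_splits)
    qed
  qed
  have valid\<gamma>: "\<forall>k\<in>{1..m+2}. valid S (\<gamma> k)"
  proof
    fix k assume k: "k \<in> {1..m+2}"
    show "valid S (\<gamma> k)"
    proof (cases "k \<ge> 3")
      case True then have "k - 2 \<in> {1..m}" using k by auto
      then show ?thesis using True eS unfolding \<gamma>_def valid_def by auto
    next
      case False then show ?thesis using k unfolding \<gamma>_def valid_def by auto
    qed
  qed
  have bij: "bij_betw (\<lambda>c. restrict (\<lambda>r. A r c) T) UNIV (T \<rightarrow>\<^sub>E {0..<q})"
    if T: "T \<subseteq> {1..m+2} \<times> {1,2}" and cT: "card T = 4" and tj: "top_justified T" for T
  proof -
    define f where "f c = restrict (\<lambda>r. A r c) T" for c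
    have injf: "inj f"
    proof (rule injI)
      fix x y assume "f x = f y"
      then have eq: "\<forall>r\<in>T. A r x = A r y" unfolding f_def restrict_eq_iff .
      obtain x1 x2 x3 x4 where x: "x = (x1,x2,x3,x4)" by (cases x) auto
      obtain y1 y2 y3 y4 where y: "y = (y1,y2,y3,y4)" by (cases y) auto
      have s1: "\<forall>k. (k,1) \<in> T \<longrightarrow> sing (\<gamma> k) (y - x)"
      proof (intro allI impI)
        fix k assume kT: "(k,1) \<in> T"
        then have k: "k \<in> {1..m+2}" using T by auto
        have Ak: "A (k,1) x = A (k,1) y" using eq kT by blast
        show "sing (\<gamma> k) (y - x)"
        proof (cases "k \<ge> 3")
          case True
          then have km: "k - 2 \<in> {1..m}" using k by auto
          have "M (e (k-2)) y div CARD('a) = M (e (k-2)) x div CARD('a)"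
            using Ak A5[OF True, of x] A5[OF True, of y] unfolding q_def by simp
          then have "Np (e (k-2)) (y - x)" using gen_V[OF genk[OF km] e0[OF km]] by blast
          then show ?thesis using True unfolding \<gamma>_def by simp
        next
          case False
          then have "k = 1 \<or> k = 2" using k by auto
          then show ?thesis
          proof
            assume "k = 1"
            then have "x1 = y1" using Ak x y encinj A14 by simp
            then show ?thesis using \<open>k = 1\<close> x y unfolding \<gamma>_def by simp
          next
            assume "k = 2"
            then have "x3 = y3" using Ak x y encinj A14 by simp
            then show ?thesis using \<open>k = 2\<close> x y unfolding \<gamma>_def by simp
          qed
        qed
      qed
      have s2: "\<forall>k. (k,2) \<in> T \<longrightarrow> full (\<gamma> k) (y - x)"
      proof (intro allI impI)
        fix k assume kT: "(k,2) \<in> T"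
        then have kT1: "(k,1) \<in> T" using tj unfolding top_justified_def by blast
        have k: "k \<in> {1..m+2}" using T kT by auto
        have Ak: "A (k,1) x = A (k,1) y" "A (k,2) x = A (k,2) y" using eq kT kT1 by blast+
        show "full (\<gamma> k) (y - x)"
        proof (cases "k \<ge> 3")
          case True
          then have km: "k - 2 \<in> {1..m}" using k by auto
          have "M (e (k-2)) y div CARD('a) = M (e (k-2)) x div CARD('a)"
               "M (e (k-2)) y mod CARD('a) = M (e (k-2)) x mod CARD('a)"
            using Ak A5[OF True, of x] A5[OF True, of y] A6[OF True, of x] A6[OF True, of y] unfolding q_def by simp_all
          then have "M (e (k-2)) y = M (e (k-2)) x" by (metis div_mult_mod_eq)
          then have "Fp (e (k-2)) (y - x)" using gen_g_iff[OF genk[OF km] e0[OF km]] by blast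
          then show ?thesis using True unfolding \<gamma>_def by simp
        next
          case False
          then have "k = 1 \<or> k = 2" using k by auto
          then show ?thesis
          proof
            assume "k = 1"
            then have "x1 = y1" "x2 = y2" using Ak x y encinj A14 by simp_all
            then show ?thesis using \<open>k = 1\<close> x y unfolding \<gamma>_def by simp
          next
            assume "k = 2"
            then have "x3 = y3" "x4 = y4" using Ak x y encinj A14 by simp_all
            then show ?thesis using \<open>k = 2\<close> x y unfolding \<gamma>_def by simp
          qed
        qed
      qed
      have "y - x = 0" using lemT[OF S T cT tj inj\<gamma> valid\<gamma> s1 s2] .
      then show "x = y" by simp
    qed
    have sub: "range f \<subseteq> T \<rightarrow>\<^sub>E {0..<q}"
      using vals T unfolding f_def by (auto simp: restrict_PiE_iff)
    have finT: "finite T" using T finite_subset by blast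
    have cB: "card (T \<rightarrow>\<^sub>E {0..<q}) = q ^ 4" using card_PiE[OF finT, of "\<lambda>_. {0..<q}"] cT by simp
    have "card (range f) = q ^ 4" using card_image[OF injf] cardU by simp
    then have "range f = T \<rightarrow>\<^sub>E {0..<q}" using card_subset_eq[OF _ sub] cB finT by (simp add: finite_PiE)
    then show ?thesis using injf unfolding bij_betw_def f_def by simp
  qed
  show ?thesis
    unfolding ooa_def
  proof (intro conjI)
    show "finite (UNIV :: 'a loc set)" by simp
    show "card (UNIV :: 'a loc set) = CARD('a) ^ 4" using cardU q_def by simp
    show "\<forall>r\<in>{1..m+2} \<times> {1,2}. \<forall>c\<in>UNIV. assoc_array enc (\<lambda>k. M (e k)) r c < CARD('a)"
      using vals unfolding A_def q_def by blast
    show "\<forall>T. T \<subseteq> {1..m + 2} \<times> {1, 2} \<and> card T = 4 \<and> top_justified T \<longrightarrow>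
      bij_betw (\<lambda>c. \<lambda>r\<in>T. assoc_array enc (\<lambda>k. M (e k)) r c) UNIV (T \<rightarrow>\<^sub>E {0..<CARD('a)})"
      using bij unfolding A_def q_def by blast
  qed
qed



lemma orth_main:
  fixes S :: "'a::{finite,field} set" and enc :: "'a \<Rightarrow> nat" and M :: "'a \<Rightarrow> 'a loc \<Rightarrow> nat" and e :: "nat \<Rightarrow> 'a"
  assumes S: "good S" and enc: "bij_betw enc UNIV {0..<CARD('a)}"
    and gen: "\<forall>i\<in>S. generated_by (M i) (Zflag i)" and e: "bij_betw e {1..m} S"
    and k: "k \<in> {1..m}" and l: "l \<in> {1..m}" and kl: "k \<noteq> l"
  shows "orthogonal (M (e k)) (M (e l))"
  unfolding orthogonal_def
proof (intro allI impI)
  define q where "q = CARD('a)"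
  define A where "A = assoc_array enc (\<lambda>k. M (e k))"
  fix s t assume st: "s < CARD('a)^2" "t < CARD('a)^2"
  have qpos: "q > 0" unfolding q_def by simp
  have O: "ooa 4 (m+2) q UNIV A" unfolding q_def A_def by (rule ooa_main[OF S enc gen e])
  define T where "T = {(k+2, 1::nat), (k+2, 2), (l+2, 1), (l+2, 2)}"
  have T: "T \<subseteq> {1..m+2} \<times> {1,2}" using k l unfolding T_def by auto
  have cT: "card T = 4" using kl unfolding T_def by simp
  have tj: "top_justified T" unfolding T_def top_justified_def by auto
  have bij: "bij_betw (\<lambda>c. restrict (\<lambda>r. A r c) T) UNIV (T \<rightarrow>\<^sub>E {0..<q})"
    using O T cT tj unfolding ooa_def by blast
  define F where "F = restrict (\<lambda>r. if r = (k+2,1) then s div q else if r = (k+2,2) then s mod q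
      else if r = (l+2,1) then t div q else t mod q) T"
  have sd: "s div q < q" "t div q < q" using st unfolding q_def
    by (simp_all add: power2_eq_square less_mult_imp_div_less)
  have FP: "F \<in> T \<rightarrow>\<^sub>E {0..<q}" unfolding F_def restrict_PiE_iff using sd qpos by auto
  have "F \<in> range (\<lambda>c. restrict (\<lambda>r. A r c) T)" using bij FP unfolding bij_betw_def by simp
  then obtain x0 where x0: "restrict (\<lambda>r. A r x0) T = F" by blast
  have A5: "j \<ge> 1 \<Longrightarrow> A (j+2,1) c = M (e j) c div q" "j \<ge> 1 \<Longrightarrow> A (j+2,2) c = M (e j) c mod q" for j c
    unfolding A_def q_def by (auto simp: assoc_array_def split: prod.splits)
  have key: "restrict (\<lambda>r. A r x) T = F \<longleftrightarrow> M (e k) x = s \<and> M (e l) x = t" for x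
  proof -
    have "restrict (\<lambda>r. A r x) T = F \<longleftrightarrow>
      (M (e k) x div q = s div q \<and> M (e k) x mod q = s mod q \<and> M (e l) x div q = t div q \<and> M (e l) x mod q = t mod q)"
      unfolding F_def restrict_eq_iff T_def using kl k l A5(1)[of k x] A5(2)[of k x] A5(1)[of l x] A5(2)[of l x] by simp
    also have "\<dots> \<longleftrightarrow> M (e k) x = s \<and> M (e l) x = t" by (metis div_mult_mod_eq)
    finally show ?thesis .
  qed
  have "{x. M (e k) x = s \<and> M (e l) x = t} = {x0}"
  proof (rule set_eqI, rule iffI)
    fix x assume "x \<in> {x. M (e k) x = s \<and> M (e l) x = t}"
    then have "restrict (\<lambda>r. A r x) T = F" using key by blast
    then have "restrict (\<lambda>r. A r x) T = restrict (\<lambda>r. A r x0) T" using x0 by simp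
    then have "x = x0" using bij unfolding bij_betw_def by (auto dest: injD)
    then show "x \<in> {x0}" by simp
  next
    fix x assume "x \<in> {x0}"
    then have "x = x0" by simp
    then show "x \<in> {x. M (e k) x = s \<and> M (e l) x = t}" using key x0 by blast
  qed
  then show "card {x. M (e k) x = s \<and> M (e l) x = t} = 1" by simp
qed



theorem theorem5p4:
  fixes S :: "'a::{finite,field} set"
    and enc :: "'a \<Rightarrow> nat"
  assumes enc: "bij_betw enc UNIV {0..<CARD('a)}"
    and S0: "0 \<notin> S"
    and Ssum: "\<forall>i\<in>S. \<forall>j\<in>S. i \<noteq> j \<longrightarrow> i + j \<noteq> 0"
    and Sprod: "\<forall>i\<in>S. \<forall>j\<in>S. i \<noteq> j \<longrightarrow> i * j \<noteq> - 1"
  shows "(\<forall>i\<in>S. sudoku_flag (Zflag i)) \<and>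
    (\<forall>M :: 'a \<Rightarrow> 'a loc \<Rightarrow> nat. (\<forall>i\<in>S. generated_by (M i) (Zflag i)) \<longrightarrow>
       inj_on M S \<and>
       (\<forall>e. bij_betw e {1..card S} S \<longrightarrow> strongly_orthogonal enc (card S) (\<lambda>k. M (e k))))"
proof -
  have S: "good S" using S0 Ssum Sprod unfolding good_def by blast
  have P1: "\<forall>i\<in>S. sudoku_flag (Zflag i)"
  proof
    fix i assume "i \<in> S"
    then have "i \<noteq> 0" using S0 by auto
    then show "sudoku_flag (Zflag i)" by (rule sudoku_flag_Z)
  qed
  have P2: "inj_on M S \<and>
       (\<forall>e. bij_betw e {1..card S} S \<longrightarrow> strongly_orthogonal enc (card S) (\<lambda>k. M (e k)))"
    if gen: "\<forall>i\<in>S. generated_by (M i) (Zflag i)" for M :: "'a \<Rightarrow> 'a loc \<Rightarrow> nat"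
  proof
    show "inj_on M S"
    proof (rule inj_onI)
      fix i j assume ij: "i \<in> S" "j \<in> S" "M i = M j"
      have i0: "i \<noteq> 0" and j0: "j \<noteq> 0" using ij S0 by auto
      define v where "v = ((1::'a), (0::'a), i, (0::'a))"
      have "Fp i (v - 0)" unfolding v_def by (simp add: zero4)
      then have "M i v = M i 0" using gen_g_iff[of "M i" i v 0] gen ij(1) i0 by blast
      then have "M j v = M j 0" using ij(3) by simp
      then have "Fp j (v - 0)" using gen_g_iff[of "M j" j v 0] gen ij(2) j0 by blast
      then show "i = j" unfolding v_def by (simp add: zero4)
    qed
    show "\<forall>e. bij_betw e {1..card S} S \<longrightarrow> strongly_orthogonal enc (card S) (\<lambda>k. M (e k))"
    proof (intro allI impI)
      fix e :: "nat \<Rightarrow> 'a" assume e: "bij_betw e {1..card S} S"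
      have eS: "e k \<in> S" if "k \<in> {1..card S}" for k using e that by (rule bij_betw_apply)
      show "strongly_orthogonal enc (card S) (\<lambda>k. M (e k))"
        unfolding strongly_orthogonal_def
      proof (intro conjI ballI impI)
        fix k assume "k \<in> {1..card S}"
        then show "sudoku (M (e k))" using gen eS unfolding generated_by_def by blast
      next
        fix k l assume "k \<in> {1..card S}" "l \<in> {1..card S}" "k \<noteq> l"
        then show "orthogonal (M (e k)) (M (e l))" by (rule orth_main[OF S enc gen e])
      next
        show "ooa 4 (card S + 2) CARD('a) UNIV (assoc_array enc (\<lambda>k. M (e k)))"
          by (rule ooa_main[OF S enc gen e])
      qed
    qed
  qed
  show ?thesis using P1 P2 by blast
qed


end
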